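(* Let $q$ be a probability measure on $(0,\infty)$ (absolutely continuous part plus finitely many atoms, finite mean), $r^\star>0$, $\mathcal C_1=(0,r^\star]$, $\mathcal C_2=(r^\star,\infty)$, $p^i=q(\mathcal C_i)>0$, and $q^i(I)=q(I\cap\mathcal C_i)/p^i$ for $i=1,2$. Let $d>0$, write $\hat\nu(d)=\int e^{-dr}\nu(dr)$, and define $$\pi^i=p^i\frac{1-\hat q^i(d)}{1-\hat q(d)},\qquad \mu^{\rm in}=\frac{d}{1-\hat q(d)},\qquad \mu^{{\rm in},i}=\frac{d}{1-\hat q^i(d)}\quad(i=1,2).$$ Then $\pi^1\le p^1$, $\pi^2\ge p^2$, and $\mu^{{\rm in},2}\le\mu^{\rm in}\le\mu^{{\rm in},1}$. *)

theory Defs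
  imports "HOL-Probability.Probability"
begin

definition laplace :: "real measure \<Rightarrow> real \<Rightarrow> real" where
  "laplace \<nu> d = (\<integral>r. exp (- d * r) \<partial>\<nu>)"

definition cond_meas :: "real measure \<Rightarrow> real set \<Rightarrow> real measure" where
  "cond_meas q C = density q (\<lambda>x. ennreal (indicator C x / measure q C))"

end

theory Submission
  imports Defs
begin

lemma helper_ineq:
  fixes p1 p2 L1 L2 e d :: real
  assumes "p1 > 0" "p2 > 0" "p1 + p2 = 1" "e \<le> L1" "L1 < 1" "L2 \<le> e" "d > 0"
  shows "p1 * (1 - L1) / (1 - (p1*L1+p2*L2)) \<le> p1 \<and> p2 \<le> p2 * (1 - L2) / (1 - (p1*L1+p2*L2)) \<and>
     d / (1 - L2) \<le> d / (1 - (p1*L1+p2*L2)) \<and> d / (1 - (p1*L1+p2*L2)) \<le> d / (1 - L1)"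
proof -
  have L2L1: "L2 \<le> L1" using assms by linarith
  have p1e: "p1 = 1 - p2" using assms by linarith
  have e1: "L1 - (p1*L1+p2*L2) = p2*(L1-L2)" unfolding p1e by (simp add: algebra_simps)
  have e2: "(p1*L1+p2*L2) - L2 = p1*(L1-L2)" unfolding p1e by (simp add: algebra_simps)
  have "p2*(L1-L2) \<ge> 0" "p1*(L1-L2) \<ge> 0" using assms L2L1 by simp_all
  then have up: "p1*L1+p2*L2 \<le> L1" and lo: "L2 \<le> p1*L1+p2*L2" using e1 e2 by linarith+
  have pos: "1 - (p1*L1+p2*L2) > 0" using up assms by linarith
  have s1: "1 - L1 \<le> 1 - (p1*L1+p2*L2)" using up by linarith
  have s2: "1 - (p1*L1+p2*L2) \<le> 1 - L2" using lo by linarith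
  show ?thesis
  proof (intro conjI)
    show "p1 * (1 - L1) / (1 - (p1*L1+p2*L2)) \<le> p1"
      using pos s1 assms by (simp add: divide_le_eq mult_left_mono)
    show "p2 \<le> p2 * (1 - L2) / (1 - (p1*L1+p2*L2))"
      using pos s2 assms by (simp add: le_divide_eq mult_left_mono)
    show "d / (1 - L2) \<le> d / (1 - (p1*L1+p2*L2))"
      using pos s2 assms by (intro divide_left_mono) auto
    show "d / (1 - (p1*L1+p2*L2)) \<le> d / (1 - L1)"
      using pos s1 assms by (intro divide_left_mono) auto
  qed
qed

theorem corollary2p9:
  fixes q :: "real measure" and rstar d :: real
  assumes prob: "prob_space q"
    and sets_q: "sets q = sets borel"
    and supp: "emeasure q {..0} = 0"
    and ac_atoms: "\<exists>A. finite A \<and>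
        (\<forall>S\<in>sets borel. S \<inter> A = {} \<longrightarrow> emeasure lborel S = 0 \<longrightarrow> emeasure q S = 0)"
    and mean: "integrable q (\<lambda>r. r)"
    and rstar: "rstar > 0"
    and p1pos: "measure q {0<..rstar} > 0"
    and p2pos: "measure q {rstar<..} > 0"
    and d: "d > 0"
  shows
    "let p1 = measure q {0<..rstar}; p2 = measure q {rstar<..};
         q1 = cond_meas q {0<..rstar}; q2 = cond_meas q {rstar<..};
         pi1 = p1 * (1 - laplace q1 d) / (1 - laplace q d);
         pi2 = p2 * (1 - laplace q2 d) / (1 - laplace q d);
         mu_in = d / (1 - laplace q d);
         mu_in1 = d / (1 - laplace q1 d);
         mu_in2 = d / (1 - laplace q2 d)
     in pi1 \<le> p1 \<and> pi2 \<ge> p2 \<and> mu_in2 \<le> mu_in \<and> mu_in \<le> mu_in1"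
proof -
  interpret prob_space q by (rule prob)
  note [measurable_cong] = sets_q
  have spq: "space q = UNIV" using sets_eq_imp_space_eq[OF sets_q] by simp
  define C1 where "C1 = {0<..rstar}"
  define C2 where "C2 = {rstar<..}"
  define p1 where "p1 = measure q C1"
  define p2 where "p2 = measure q C2"
  define f where "f = (\<lambda>r::real. exp (- d * r))"
  define e where "e = exp (- d * rstar)"
  have [measurable]: "C1 \<in> sets q" "C2 \<in> sets q" unfolding C1_def C2_def by (simp_all add: sets_q)
  have fm[measurable]: "f \<in> borel_measurable q" unfolding f_def by measurable
  have AEpos: "AE r in q. r > 0"
  proof (rule AE_I')
    show "{..0::real} \<in> null_sets q" using supp by (simp add: null_sets_def sets_q)
  qed (auto simp: spq)
  have fbd: "AE r in q. norm (f r) \<le> 1"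
    using AEpos by eventually_elim (use d in \<open>auto simp: f_def\<close>)
  have intf: "integrable q f" by (rule integrable_const_bound[OF fbd fm])
  have int1: "integrable q (\<lambda>r. indicator C1 r * f r)"
    using intf by (intro integrable_mult_indicator[where 'b=real, simplified]) auto
  have int2: "integrable q (\<lambda>r. indicator C2 r * f r)"
    using intf by (intro integrable_mult_indicator[where 'b=real, simplified]) auto
  define I1 where "I1 = (\<integral>r. indicator C1 r * f r \<partial>q)"
  define I2 where "I2 = (\<integral>r. indicator C2 r * f r \<partial>q)"
  have L: "laplace q d = I1 + I2"
  proof -
    have "laplace q d = (\<integral>r. indicator C1 r * f r + indicator C2 r * f r \<partial>q)"
      unfolding laplace_def f_def[symmetric]
      by (rule integral_cong_AE) (use AEpos in \<open>auto elim!: eventually_mono simp: C1_def C2_def indicator_def\<close>)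
    also have "\<dots> = I1 + I2" unfolding I1_def I2_def by (rule Bochner_Integration.integral_add[OF int1 int2])
    finally show ?thesis .
  qed
  have psum: "p1 + p2 = 1"
  proof -
    have "p1 + p2 = measure q (C1 \<union> C2)" unfolding p1_def p2_def
      by (rule finite_measure_Union[symmetric]) (auto simp: C1_def C2_def)
    also have "\<dots> = measure q UNIV"
      by (rule measure_eq_AE) (use AEpos in \<open>auto elim!: eventually_mono simp: C1_def C2_def spq sets_q\<close>)
    finally show ?thesis using prob_space spq by simp
  qed
  have lap_cond: "laplace (cond_meas q C) d = (\<integral>r. indicator C r * f r \<partial>q) / measure q C"
    if [measurable]: "C \<in> sets q" for C
  proof -
    have "laplace (cond_meas q C) d = (\<integral>r. (indicator C r / measure q C) * f r \<partial>q)"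
      unfolding laplace_def cond_meas_def f_def
      by (subst integral_density) auto
    also have "\<dots> = (\<integral>r. indicator C r * f r / measure q C \<partial>q)"
      by (simp add: mult_ac)
    also have "\<dots> = (\<integral>r. indicator C r * f r \<partial>q) / measure q C"
      by (rule integral_divide_zero)
    finally show ?thesis .
  qed
  have L1: "laplace (cond_meas q C1) d = I1 / p1" using lap_cond[of C1] by (simp add: I1_def p1_def)
  have L2: "laplace (cond_meas q C2) d = I2 / p2" using lap_cond[of C2] by (simp add: I2_def p2_def)
  have hp1: "p1 > 0" using p1pos by (simp add: p1_def C1_def)
  have hp2: "p2 > 0" using p2pos by (simp add: p2_def C2_def)
  have intc: "integrable q (\<lambda>r. indicator C r * (c::real))" if [measurable]: "C \<in> sets q" for C c
    by (rule integrable_const_bound[where B="\<bar>c\<bar>"]) (auto simp: indicator_def)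
  have I1ge: "e * p1 \<le> I1"
  proof -
    have "e * p1 = (\<integral>r. indicator C1 r * e \<partial>q)" by (simp add: p1_def mult.commute)
    also have "\<dots> \<le> I1" unfolding I1_def
      by (rule integral_mono[OF intc[of C1 e] int1]) (auto simp: indicator_def C1_def e_def f_def d)
    finally show ?thesis .
  qed
  have I2le: "I2 \<le> e * p2"
  proof -
    have "I2 \<le> (\<integral>r. indicator C2 r * e \<partial>q)" unfolding I2_def
      by (rule integral_mono[OF int2 intc[of C2 e]]) (auto simp: indicator_def C2_def e_def f_def d)
    also have "\<dots> = e * p2" by (simp add: p2_def mult.commute)
    finally show ?thesis .
  qed
  have I1lt: "I1 < p1"
  proof -
    have "I1 < (\<integral>r. indicator C1 r * 1 \<partial>q)" unfolding I1_def
    proof (rule integral_less_AE[where A=C1])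
      show "emeasure q C1 \<noteq> 0" using hp1 by (simp add: p1_def emeasure_eq_measure)
      show "integrable q (\<lambda>r. indicator C1 r * (1::real))"
        by (rule integrable_const_bound[where B=1]) (auto simp: indicator_def)
    qed (use int1 rstar d in \<open>auto simp: indicator_def C1_def f_def\<close>)
    then show ?thesis by (simp add: p1_def)
  qed
  define L1 where "L1 = I1 / p1"
  define L2 where "L2 = I2 / p2"
  have eqs: "I1 = p1 * L1" "I2 = p2 * L2" using hp1 hp2 by (simp_all add: L1_def L2_def)
  have a1: "e \<le> L1" "L1 < 1" using I1ge I1lt hp1 by (simp_all add: L1_def field_simps)
  have a2: "L2 \<le> e" using I2le hp2 by (simp add: L2_def field_simps)
  have main: "p1 * (1 - L1) / (1 - (p1*L1+p2*L2)) \<le> p1 \<and> p2 \<le> p2 * (1 - L2) / (1 - (p1*L1+p2*L2)) \<and>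
     d / (1 - L2) \<le> d / (1 - (p1*L1+p2*L2)) \<and> d / (1 - (p1*L1+p2*L2)) \<le> d / (1 - L1)"
    using helper_ineq[OF hp1 hp2 psum a1 a2 d] .
  have E0: "laplace q d = p1*L1+p2*L2" using L eqs by simp
  have E1: "laplace (cond_meas q C1) d = L1" using L1 by (simp add: L1_def)
  have E2: "laplace (cond_meas q C2) d = L2" using L2 by (simp add: L2_def)
  show ?thesis using main
    unfolding Let_def C1_def[symmetric] C2_def[symmetric] p1_def[symmetric] p2_def[symmetric] E0 E1 E2 .
qed

end
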